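(* Let $T\in\mathbb R^{m\times n}$ be injective and satisfy the positive cone condition, $y\in\mathbb R^m$, and $\lambda>0$. Then there exists $\varepsilon\in(0,\lambda)$ such that $N(\lambda)\subset N(\mu)$ for all $\mu\in[\lambda-\varepsilon,\lambda]$.
   Context: For $\lambda>0$, $x_\lambda$ is the unique minimizer of $x\mapsto\frac{\lambda}{2}\|Tx-y\|_2^2+\|x\|_1$ on $\mathbb R^n$; $N(\lambda)=\{i:x_\lambda^i=0\}$. Positive cone condition: for every nonempty $J\subset\{1,\dots,n\}$, with $T^J$ the submatrix of columns indexed by $J$ and $S_J=((T^J)^TT^J)^{-1}$, one has $(S_J)_{i,i}-\sum_{j\ne i}|(S_J)_{i,j}|\ge0$ for all $i\in J$. *)

theory Defs
  imports "HOL-Analysis.Analysis"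
begin

definition lasso_obj :: "real^'n^'m \<Rightarrow> real^'m \<Rightarrow> real \<Rightarrow> real^'n \<Rightarrow> real" where
  "lasso_obj T y lam x = lam / 2 * (norm (T *v x - y))^2 + (\<Sum>i\<in>UNIV. \<bar>x $ i\<bar>)"

definition lasso_min :: "real^'n^'m \<Rightarrow> real^'m \<Rightarrow> real \<Rightarrow> real^'n" where
  "lasso_min T y lam = (THE x. \<forall>z. lasso_obj T y lam x \<le> lasso_obj T y lam z)"

definition zero_set :: "real^'n^'m \<Rightarrow> real^'m \<Rightarrow> real \<Rightarrow> 'n set" where
  "zero_set T y lam = {i. lasso_min T y lam $ i = 0}"

text \<open>S_J = ((T^J)^T T^J)^{-1}, indexed by J x J (entries outside J x J set to 0).
  The entries of (T^J)^T T^J are the inner products of the columns i, j in J.\<close>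
definition S_J :: "real^'n^'m \<Rightarrow> 'n set \<Rightarrow> 'n \<Rightarrow> 'n \<Rightarrow> real" where
  "S_J T J = (THE S. (\<forall>i k. (i \<notin> J \<or> k \<notin> J) \<longrightarrow> S i k = 0) \<and>
      (\<forall>i\<in>J. \<forall>k\<in>J. (\<Sum>j\<in>J. (column i T \<bullet> column j T) * S j k) = (if i = k then 1 else 0)))"

definition positive_cone_condition :: "real^'n^'m \<Rightarrow> bool" where
  "positive_cone_condition T \<longleftrightarrow>
     (\<forall>J. J \<noteq> {} \<longrightarrow> (\<forall>i\<in>J. S_J T J i i - (\<Sum>j\<in>J - {i}. \<bar>S_J T J i j\<bar>) \<ge> 0))"

end

theory Submission
  imports Defs
begin


lemma Tv_inner:
  fixes T :: "real^'n^'m"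
  shows "(T *v u) \<bullet> v = (\<Sum>k\<in>UNIV. u$k * (column k T \<bullet> v))"
  by (simp add: matrix_mult_sum inner_sum_left scalar_mult_eq_scaleR)

lemma col_Tv:
  fixes T :: "real^'n^'m"
  assumes "\<forall>i. i \<notin> J \<longrightarrow> v$i = 0"
  shows "column k T \<bullet> (T *v v) = (\<Sum>j\<in>J. (column k T \<bullet> column j T) * v$j)"
proof -
  have "column k T \<bullet> (T *v v) = (\<Sum>j\<in>UNIV. (column k T \<bullet> column j T) * v$j)"
    by (simp add: matrix_mult_sum inner_sum_right mult.commute scalar_mult_eq_scaleR)
  also have "\<dots> = (\<Sum>j\<in>J. (column k T \<bullet> column j T) * v$j)"
    using assms by (intro sum.mono_neutral_right) auto
  finally show ?thesis .
qed

lemma zero_lemma: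
  fixes T :: "real^'n^'m"
  assumes inj: "inj (\<lambda>x. T *v x)" and sup: "\<forall>i. i \<notin> J \<longrightarrow> u$i = 0"
    and h: "\<forall>k\<in>J. column k T \<bullet> (T *v u) = 0"
  shows "u = 0"
proof -
  have "(T *v u) \<bullet> (T *v u) = (\<Sum>k\<in>UNIV. u$k * (column k T \<bullet> (T *v u)))"
    by (rule Tv_inner)
  also have "\<dots> = 0" using sup h by (intro sum.neutral) (metis mult_zero_left mult_zero_right)
  finally have "T *v u = 0" by simp
  then show ?thesis using inj by (metis injD matrix_vector_mult_0_right)
qed

lemma solve_lemma:
  fixes T :: "real^'n^'m" and b :: "real^'n"
  assumes inj: "inj (\<lambda>x. T *v x)"
  shows "\<exists>v. (\<forall>i. i \<notin> J \<longrightarrow> v$i = 0) \<and> (\<forall>k\<in>J. column k T \<bullet> (T *v v) = b$k)"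
proof -
  define f where "f = (\<lambda>v::real^'n. \<chi> i. if i \<in> J then column i T \<bullet> (T *v v) else v$i)"
  have lin: "linear f"
    unfolding f_def by (rule linearI) (auto simp: vec_eq_iff matrix_vector_right_distrib
        matrix_vector_mult_scaleR inner_add_right)
  have "inj f"
  proof (rule inj_onI)
    fix p q assume pq: "f p = f q"
    define u where "u = p - q"
    have "f u = 0" using pq lin unfolding u_def by (simp add: linear_diff)
    then have a: "\<forall>i. i \<notin> J \<longrightarrow> u$i = 0" and b: "\<forall>k\<in>J. column k T \<bullet> (T *v u) = 0"
      unfolding f_def by (auto simp: vec_eq_iff split: if_splits; metis)+
    have "u = 0" by (rule zero_lemma[OF inj a b])
    then show "p = q" unfolding u_def by simp
  qed
  then have "surj f" using lin linear_injective_imp_surjective by blast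
  then obtain v where v: "f v = (\<chi> i. if i \<in> J then b$i else 0)" by (metis surjD)
  show ?thesis
    by (rule exI[of _ v]) (use v in \<open>auto simp: f_def vec_eq_iff split: if_splits\<close>; metis)+
qed

lemma SJ_prop:
  fixes T :: "real^'n^'m"
  assumes inj: "inj (\<lambda>x. T *v x)"
  shows "(\<forall>i k. (i \<notin> J \<or> k \<notin> J) \<longrightarrow> S_J T J i k = 0) \<and>
      (\<forall>i\<in>J. \<forall>k\<in>J. (\<Sum>j\<in>J. (column i T \<bullet> column j T) * S_J T J j k) = (if i = k then 1 else 0))"
proof -
  define P where "P = (\<lambda>S. (\<forall>i k. (i \<notin> J \<or> k \<notin> J) \<longrightarrow> S i k = (0::real)) \<and>
      (\<forall>i\<in>J. \<forall>k\<in>J. (\<Sum>j\<in>J. (column i T \<bullet> column j T) * S j k) = (if i = k then 1 else 0)))"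
  have ex: "\<exists>S. P S"
  proof -
    have "\<forall>k. \<exists>v. (\<forall>i. i \<notin> J \<longrightarrow> v$i = 0) \<and> (\<forall>i\<in>J. column i T \<bullet> (T *v v) = (axis k 1 :: real^'n)$i)"
      using solve_lemma[OF inj] by blast
    then obtain v where v: "\<And>k. (\<forall>i. i \<notin> J \<longrightarrow> v k $i = 0) \<and> (\<forall>i\<in>J. column i T \<bullet> (T *v v k) = (axis k 1 :: real^'n)$i)"
      by metis
    define S where "S = (\<lambda>i k. if i \<in> J \<and> k \<in> J then v k $ i else 0)"
    have "P S" unfolding P_def
    proof (intro conjI allI ballI impI)
      fix i k assume "i \<notin> J \<or> k \<notin> J" then show "S i k = 0" by (auto simp: S_def)
    next
      fix i k assume i: "i \<in> J" and k: "k \<in> J"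
      have "(\<Sum>j\<in>J. (column i T \<bullet> column j T) * S j k) = (\<Sum>j\<in>J. (column i T \<bullet> column j T) * v k $ j)"
        using k by (intro sum.cong) (auto simp: S_def)
      also have "\<dots> = column i T \<bullet> (T *v v k)" using col_Tv[of J "v k" i T] v by simp
      also have "\<dots> = (if i = k then 1 else 0)" using v i by (simp add: axis_def)
      finally show "(\<Sum>j\<in>J. (column i T \<bullet> column j T) * S j k) = (if i = k then 1 else 0)" .
    qed
    then show ?thesis by blast
  qed
  have un: "S = S'" if "P S" "P S'" for S S'
  proof (intro ext)
    fix i k
    show "S i k = S' i k"
    proof (cases "i \<in> J \<and> k \<in> J")
      case False then show ?thesis using that unfolding P_def by auto
    next
      case True
      define u where "u = (\<chi> a. S a k - S' a k)"
      have su: "\<forall>a. a \<notin> J \<longrightarrow> u$a = 0" using that unfolding P_def u_def by auto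
      have "\<forall>a\<in>J. column a T \<bullet> (T *v u) = 0"
      proof
        fix a assume a: "a \<in> J"
        have "column a T \<bullet> (T *v u) = (\<Sum>j\<in>J. (column a T \<bullet> column j T) * u$j)"
          by (rule col_Tv[OF su])
        also have "\<dots> = (\<Sum>j\<in>J. (column a T \<bullet> column j T) * S j k) - (\<Sum>j\<in>J. (column a T \<bullet> column j T) * S' j k)"
          by (simp add: u_def algebra_simps sum_subtractf)
        also have "\<dots> = 0" using that a True unfolding P_def by auto
        finally show "column a T \<bullet> (T *v u) = 0" .
      qed
      then have "u = 0" using zero_lemma[OF inj su] by blast
      then show ?thesis unfolding u_def by (metis (no_types, lifting) eq_iff_diff_eq_0 vec_lambda_beta zero_index)
    qed
  qed
  have "P (THE S. P S)" using ex un by (metis theI)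
  then show ?thesis unfolding P_def S_J_def .
qed

lemma aux_comm: "(x::real) * (((u::real^'m) \<bullet> v) * z) = z * ((v \<bullet> u) * x)"
  by (simp add: inner_commute)

lemma SJ_sym:
  fixes T :: "real^'n^'m"
  assumes inj: "inj (\<lambda>x. T *v x)" and i: "i \<in> J" and k: "k \<in> J"
  shows "S_J T J i k = S_J T J k i"
proof -
  let ?S = "S_J T J" and ?G = "\<lambda>a b. column a T \<bullet> column b T"
  have P: "\<forall>a\<in>J. \<forall>b\<in>J. (\<Sum>j\<in>J. ?G a j * ?S j b) = (if a = b then 1 else 0)"
    using conjunct2[OF SJ_prop[OF inj, of J]] .
  have "(\<Sum>a\<in>J. ?S a i * (\<Sum>b\<in>J. ?G a b * ?S b k)) = (\<Sum>a\<in>J. ?S a i * (if a = k then 1 else 0))"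
    using P k by (intro sum.cong) auto
  also have "\<dots> = (\<Sum>a\<in>J. if a = k then ?S a i else 0)" by (intro sum.cong) auto
  also have "\<dots> = ?S k i" using k by (simp add: sum.delta')
  finally have 1: "(\<Sum>a\<in>J. ?S a i * (\<Sum>b\<in>J. ?G a b * ?S b k)) = ?S k i" .
  have "(\<Sum>b\<in>J. ?S b k * (\<Sum>a\<in>J. ?G b a * ?S a i)) = (\<Sum>b\<in>J. ?S b k * (if b = i then 1 else 0))"
    using P i by (intro sum.cong) auto
  also have "\<dots> = (\<Sum>b\<in>J. if b = i then ?S b k else 0)" by (intro sum.cong) auto
  also have "\<dots> = ?S i k" using i by (simp add: sum.delta')
  finally have 2: "(\<Sum>b\<in>J. ?S b k * (\<Sum>a\<in>J. ?G b a * ?S a i)) = ?S i k" .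
  have "(\<Sum>a\<in>J. ?S a i * (\<Sum>b\<in>J. ?G a b * ?S b k)) = (\<Sum>b\<in>J. ?S b k * (\<Sum>a\<in>J. ?G b a * ?S a i))"
  proof -
    have "(\<Sum>a\<in>J. ?S a i * (\<Sum>b\<in>J. ?G a b * ?S b k)) = (\<Sum>a\<in>J. \<Sum>b\<in>J. ?S a i * (?G a b * ?S b k))"
      by (simp add: sum_distrib_left)
    also have "\<dots> = (\<Sum>b\<in>J. \<Sum>a\<in>J. ?S a i * (?G a b * ?S b k))" by (rule sum.swap)
    also have "\<dots> = (\<Sum>b\<in>J. \<Sum>a\<in>J. ?S b k * (?G b a * ?S a i))"
      by (intro sum.cong refl) (rule aux_comm)
    also have "\<dots> = (\<Sum>b\<in>J. ?S b k * (\<Sum>a\<in>J. ?G b a * ?S a i))"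
      by (simp add: sum_distrib_left)
    finally show ?thesis .
  qed
  then show ?thesis using 1 2 by simp
qed


lemma pcc_bound:
  fixes T :: "real^'n^'m" and w :: "real^'n"
  assumes inj: "inj (\<lambda>x. T *v x)" and pcc: "positive_cone_condition T" and j: "j \<notin> I"
    and wsup: "\<forall>i. i \<notin> I \<longrightarrow> w$i = 0"
    and wc: "\<forall>k\<in>I. column k T \<bullet> (T *v w) = c k"
    and cb: "\<forall>k\<in>I. \<bar>c k\<bar> \<le> 1"
  shows "\<bar>column j T \<bullet> (T *v w)\<bar> \<le> 1"
proof -
  define J where "J = insert j I"
  let ?S = "S_J T J" and ?G = "\<lambda>a b. column a T \<bullet> column b T"
  define g where "g = column j T \<bullet> (T *v w)"
  have fin: "finite I" by simp
  have JI: "J - {j} = I" using j unfolding J_def by auto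
  have jJ: "j \<in> J" unfolding J_def by simp
  have P: "\<forall>a\<in>J. \<forall>b\<in>J. (\<Sum>l\<in>J. ?G a l * ?S l b) = (if a = b then 1 else 0)"
    using conjunct2[OF SJ_prop[OF inj, of J]] .
  have "?S j j - (\<Sum>l\<in>J - {j}. \<bar>?S j l\<bar>) \<ge> 0"
    using pcc jJ unfolding positive_cone_condition_def by blast
  then have "(\<Sum>l\<in>I. \<bar>?S j l\<bar>) \<le> ?S j j" using JI by simp
  moreover have "(\<Sum>l\<in>I. \<bar>?S j l\<bar>) = (\<Sum>l\<in>I. \<bar>?S l j\<bar>)"
    by (intro sum.cong refl) (metis SJ_sym[OF inj] J_def insertCI)
  ultimately have pc: "(\<Sum>l\<in>I. \<bar>?S l j\<bar>) \<le> ?S j j" by simp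
  define X where "X = (\<Sum>k\<in>J. ?S k j * (column k T \<bullet> (T *v w)))"
  have Xa: "X = ?S j j * g + (\<Sum>k\<in>I. ?S k j * c k)"
    unfolding X_def J_def g_def using j fin wc by (simp add: sum.insert)
  have wsupJ: "\<forall>i. i \<notin> J \<longrightarrow> w$i = 0" using wsup unfolding J_def by auto
  have "X = (\<Sum>k\<in>J. ?S k j * (\<Sum>l\<in>J. ?G k l * w$l))"
    unfolding X_def by (intro sum.cong refl) (simp add: col_Tv[OF wsupJ])
  also have "\<dots> = (\<Sum>k\<in>J. \<Sum>l\<in>J. ?S k j * (?G k l * w$l))" by (simp add: sum_distrib_left)
  also have "\<dots> = (\<Sum>l\<in>J. \<Sum>k\<in>J. ?S k j * (?G k l * w$l))" by (rule sum.swap)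
  also have "\<dots> = (\<Sum>l\<in>J. \<Sum>k\<in>J. w$l * (?G l k * ?S k j))"
    by (intro sum.cong refl) (rule aux_comm)
  also have "\<dots> = (\<Sum>l\<in>J. w$l * (\<Sum>k\<in>J. ?G l k * ?S k j))" by (simp add: sum_distrib_left)
  also have "\<dots> = (\<Sum>l\<in>J. w$l * (if l = j then 1 else 0))"
    using P jJ by (intro sum.cong refl) auto
  also have "\<dots> = (\<Sum>l\<in>J. if l = j then w$l else 0)" by (intro sum.cong) auto
  also have "\<dots> = w$j" using jJ by (simp add: sum.delta')
  also have "\<dots> = 0" using wsup j by simp
  finally have X0: "X = 0" .
  have e: "?S j j * g = - (\<Sum>k\<in>I. ?S k j * c k)" using Xa X0 by simp
  have "\<bar>\<Sum>k\<in>I. ?S k j * c k\<bar> \<le> (\<Sum>k\<in>I. \<bar>?S k j * c k\<bar>)" by (rule sum_abs)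
  also have "\<dots> \<le> (\<Sum>k\<in>I. \<bar>?S k j\<bar>)"
  proof (intro sum_mono)
    fix k assume "k \<in> I"
    then have "\<bar>c k\<bar> \<le> 1" using cb by blast
    then show "\<bar>?S k j * c k\<bar> \<le> \<bar>?S k j\<bar>"
      by (simp add: abs_mult mult_left_le)
  qed
  finally have b1: "\<bar>?S j j\<bar> * \<bar>g\<bar> \<le> ?S j j" using e pc by (simp add: abs_mult)
  have pos: "?S j j > 0"
  proof (rule ccontr)
    assume "\<not> ?S j j > 0"
    then have "(\<Sum>l\<in>I. \<bar>?S l j\<bar>) \<le> 0" using pc by simp
    then have z: "\<forall>l\<in>I. ?S l j = 0" using fin
      by (metis (no_types, lifting) abs_ge_zero abs_le_zero_iff order_antisym sum_nonneg sum_nonneg_eq_0_iff)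
    have "?S j j \<ge> 0" using pc by (meson order_trans sum_nonneg abs_ge_zero)
    then have "?S j j = 0" using \<open>\<not> ?S j j > 0\<close> by simp
    then have "\<forall>l\<in>J. ?S l j = 0" using z unfolding J_def by auto
    then have "(\<Sum>l\<in>J. ?G j l * ?S l j) = 0" by simp
    moreover have "(\<Sum>l\<in>J. ?G j l * ?S l j) = 1" using P jJ by auto
    ultimately show False by simp
  qed
  then show ?thesis using b1 unfolding g_def[symmetric]
  proof -
    have "?S j j * \<bar>g\<bar> \<le> ?S j j * 1" using b1 pos by simp
    then show "\<bar>g\<bar> \<le> 1" using pos by (simp add: mult_le_cancel_left_pos)
  qed
qed



lemma limit_aux:
  fixes a B :: real
  assumes "B \<ge> 0" "\<forall>h. 0 < h \<and> h < 1 \<longrightarrow> a \<le> B * h"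
  shows "a \<le> 0"
proof (rule ccontr)
  assume "\<not> a \<le> 0" then have a: "a > 0" by simp
  define h where "h = min (1/2) (a / (2 * (B + 1)))"
  have h0: "0 < h" "h < 1" using a assms(1) by (auto simp: h_def)
  have "B * h \<le> B * (a / (2 * (B + 1)))" using assms(1) by (intro mult_left_mono) (auto simp: h_def)
  also have "\<dots> < a"
  proof -
    have D: "2 * (B + 1) > 0" using assms(1) by simp
    have "B * (a / (2 * (B + 1))) * (2 * (B + 1)) = B * a" using D by simp
    also have "\<dots> < a * (2 * (B + 1))"
    proof -
      have "B * a \<ge> 0" using a assms(1) by simp
      moreover have "a * (2 * (B + 1)) = 2 * (B * a) + 2 * a" by (simp add: algebra_simps)
      ultimately show ?thesis using a by linarith
    qed
    finally show ?thesis using D by (simp only: mult_less_cancel_right)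
  qed
  finally have "B * h < a" .
  moreover have "a \<le> B * h" using assms(2) h0 by blast
  ultimately show False by simp
qed

lemma scalar_kkt:
  fixes c x A :: real
  assumes A: "A \<ge> 0" and h: "\<forall>t. t * c \<le> A * t^2 + \<bar>x + t\<bar> - \<bar>x\<bar>"
  shows "\<bar>c\<bar> \<le> 1 \<and> c * x = \<bar>x\<bar>"
proof -
  have "c - 1 \<le> 0"
  proof (rule limit_aux[OF A], intro allI impI)
    fix t :: real assume t: "0 < t \<and> t < 1"
    have "\<bar>x + t\<bar> \<le> \<bar>x\<bar> + \<bar>t\<bar>" by (rule abs_triangle_ineq)
    moreover have "\<bar>t\<bar> = t" using t by simp
    ultimately have "t * c \<le> A * t^2 + t" using h[rule_format, of t] by linarith
    then have "t * (c - 1) \<le> t * (A * t)" by (simp add: power2_eq_square algebra_simps)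
    then show "c - 1 \<le> A * t" using t by simp
  qed
  moreover have "- c - 1 \<le> 0"
  proof (rule limit_aux[OF A], intro allI impI)
    fix t :: real assume t: "0 < t \<and> t < 1"
    have "\<bar>x + (-t)\<bar> \<le> \<bar>x\<bar> + \<bar>-t\<bar>" by (rule abs_triangle_ineq)
    moreover have "\<bar>-t\<bar> = t" using t by simp
    moreover have "(-t)^2 = t^2" by simp
    ultimately have "(-t) * c \<le> A * t^2 + t" using h[rule_format, of "-t"] by (simp only:)
    then have "t * (-c - 1) \<le> t * (A * t)" by (simp add: power2_eq_square algebra_simps)
    then show "-c - 1 \<le> A * t" using t by simp
  qed
  moreover have "\<bar>x\<bar> - c * x \<le> 0"
  proof (rule limit_aux[of "A * x^2"], use A in simp, intro allI impI)
    fix t :: real assume t: "0 < t \<and> t < 1"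
    have "(- t * x) * c \<le> A * (t * x)^2 + \<bar>x - t * x\<bar> - \<bar>x\<bar>"
      using h[rule_format, of "- t * x"] by (simp add: power2_eq_square)
    moreover have "\<bar>x - t * x\<bar> = (1 - t) * \<bar>x\<bar>"
    proof -
      have "x - t * x = (1 - t) * x" by (simp add: algebra_simps)
      then show ?thesis using t by (simp add: abs_mult)
    qed
    ultimately have "t * (\<bar>x\<bar> - c * x) \<le> t * (A * x^2 * t)"
      by (simp add: power2_eq_square algebra_simps)
    then show "\<bar>x\<bar> - c * x \<le> A * x^2 * t" using t by simp
  qed
  moreover have "c * x \<le> \<bar>x\<bar>"
  proof -
    have "\<bar>c\<bar> \<le> 1" using calculation by simp
    have "c * x \<le> \<bar>c * x\<bar>" by (rule abs_ge_self)
    then have "c * x \<le> \<bar>c\<bar> * \<bar>x\<bar>" by (simp add: abs_mult)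
    also have "\<dots> \<le> \<bar>x\<bar>" using \<open>\<bar>c\<bar> \<le> 1\<close> by (simp add: mult_left_le_one_le)
    finally show ?thesis .
  qed
  ultimately show ?thesis by linarith
qed

lemma obj_expand:
  fixes T :: "real^'n^'m"
  shows "lasso_obj T y lam (x + d) = lasso_obj T y lam x
     - (\<Sum>k\<in>UNIV. d$k * (lam * (column k T \<bullet> (y - T *v x))))
     + lam / 2 * (norm (T *v d))^2 + (\<Sum>k\<in>UNIV. \<bar>x$k + d$k\<bar> - \<bar>x$k\<bar>)"
proof -
  have n: "(norm (T *v (x + d) - y))^2 = (norm (T *v x - y))^2 + 2 * ((T *v d) \<bullet> (T *v x - y)) + (norm (T *v d))^2"
    by (simp add: power2_norm_eq_inner matrix_vector_right_distrib inner_add inner_diff inner_commute algebra_simps)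
  have i: "(T *v d) \<bullet> (T *v x - y) = - (\<Sum>k\<in>UNIV. d$k * (column k T \<bullet> (y - T *v x)))"
    by (simp add: Tv_inner sum_negf[symmetric] inner_diff sum_subtractf[symmetric] algebra_simps)
  show ?thesis
    unfolding lasso_obj_def n i
    by (simp add: sum_subtractf sum_distrib_left algebra_simps)
qed



lemma kkt_suff:
  fixes T :: "real^'n^'m"
  assumes lam: "lam > 0"
    and K: "\<forall>i. \<bar>lam * (column i T \<bullet> (y - T *v z))\<bar> \<le> 1 \<and>
               lam * (column i T \<bullet> (y - T *v z)) * z$i = \<bar>z$i\<bar>"
  shows "lasso_obj T y lam z \<le> lasso_obj T y lam x'"
proof -
  define d where "d = x' - z"
  define c where "c = (\<lambda>i. lam * (column i T \<bullet> (y - T *v z)))"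
  have x': "x' = z + d" unfolding d_def by simp
  have "(\<Sum>k\<in>UNIV. d$k * c k) \<le> (\<Sum>k\<in>UNIV. \<bar>z$k + d$k\<bar> - \<bar>z$k\<bar>)"
  proof (rule sum_mono)
    fix k
    have c1: "\<bar>c k\<bar> \<le> 1" and cz: "c k * z$k = \<bar>z$k\<bar>" using K unfolding c_def by auto
    have "c k * (z$k + d$k) \<le> \<bar>c k * (z$k + d$k)\<bar>" by (rule abs_ge_self)
    also have "\<dots> = \<bar>c k\<bar> * \<bar>z$k + d$k\<bar>" by (rule abs_mult)
    also have "\<dots> \<le> \<bar>z$k + d$k\<bar>" using c1 by (simp add: mult_left_le_one_le)
    finally have "c k * z$k + c k * d$k \<le> \<bar>z$k + d$k\<bar>" by (simp add: algebra_simps)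
    then show "d$k * c k \<le> \<bar>z$k + d$k\<bar> - \<bar>z$k\<bar>" using cz by (simp add: algebra_simps)
  qed
  moreover have "lam / 2 * (norm (T *v d))^2 \<ge> 0" using lam by simp
  ultimately show ?thesis unfolding x' obj_expand[of T y lam z d] c_def by linarith
qed

lemma T_axis:
  fixes T :: "real^'n^'m"
  shows "T *v axis i t = t *\<^sub>R column i T"
proof -
  have "T *v axis i t = (\<Sum>k\<in>UNIV. (axis i t $ k) *\<^sub>R column k T)"
    by (simp add: matrix_mult_sum scalar_mult_eq_scaleR)
  also have "\<dots> = (\<Sum>k\<in>UNIV. if k = i then t *\<^sub>R column i T else 0)"
    by (intro sum.cong) (auto simp: axis_def)
  also have "\<dots> = t *\<^sub>R column i T" by (simp add: sum.delta)
  finally show ?thesis .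
qed

lemma kkt_nec:
  fixes T :: "real^'n^'m"
  assumes lam: "lam > 0"
    and M: "\<forall>x'. lasso_obj T y lam z \<le> lasso_obj T y lam x'"
  shows "\<bar>lam * (column i T \<bullet> (y - T *v z))\<bar> \<le> 1 \<and>
               lam * (column i T \<bullet> (y - T *v z)) * z$i = \<bar>z$i\<bar>"
proof (rule scalar_kkt[of "lam / 2 * (norm (column i T))^2"])
  show "0 \<le> lam / 2 * (norm (column i T))^2" using lam by simp
  show "\<forall>t. t * (lam * (column i T \<bullet> (y - T *v z))) \<le> lam / 2 * (norm (column i T))^2 * t^2 + \<bar>z$i + t\<bar> - \<bar>z$i\<bar>"
  proof
    fix t
    define d :: "real^'n" where "d = axis i t"
    have s1: "(\<Sum>k\<in>UNIV. d$k * (lam * (column k T \<bullet> (y - T *v z)))) = t * (lam * (column i T \<bullet> (y - T *v z)))"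
    proof -
      have "(\<Sum>k\<in>UNIV. d$k * (lam * (column k T \<bullet> (y - T *v z)))) = (\<Sum>k\<in>UNIV. if k = i then t * (lam * (column i T \<bullet> (y - T *v z))) else 0)"
        by (intro sum.cong) (auto simp: d_def axis_def)
      then show ?thesis by (simp add: sum.delta)
    qed
    have s2: "(\<Sum>k\<in>UNIV. \<bar>z$k + d$k\<bar> - \<bar>z$k\<bar>) = \<bar>z$i + t\<bar> - \<bar>z$i\<bar>"
    proof -
      have "(\<Sum>k\<in>UNIV. \<bar>z$k + d$k\<bar> - \<bar>z$k\<bar>) = (\<Sum>k\<in>UNIV. if k = i then \<bar>z$i + t\<bar> - \<bar>z$i\<bar> else 0)"
        by (intro sum.cong) (auto simp: d_def axis_def)
      then show ?thesis by (simp add: sum.delta)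
    qed
    have s3: "(norm (T *v d))^2 = (norm (column i T))^2 * t^2"
      unfolding d_def T_axis by (simp add: power_mult_distrib)
    have "lasso_obj T y lam z \<le> lasso_obj T y lam (z + d)" using M by blast
    then show "t * (lam * (column i T \<bullet> (y - T *v z))) \<le> lam / 2 * (norm (column i T))^2 * t^2 + \<bar>z$i + t\<bar> - \<bar>z$i\<bar>"
      unfolding obj_expand s1 s2 s3 by (simp add: algebra_simps)
  qed
qed

lemma obj_lower:
  fixes T :: "real^'n^'m"
  assumes "lam > 0"
  shows "norm x \<le> lasso_obj T y lam x"
proof -
  have "norm x \<le> (\<Sum>i\<in>UNIV. \<bar>x $ i\<bar>)" by (rule norm_le_l1_cart)
  moreover have "lam / 2 * (norm (T *v x - y))^2 \<ge> 0" using assms by simp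
  ultimately show ?thesis unfolding lasso_obj_def by linarith
qed

lemma obj_exists:
  fixes T :: "real^'n^'m"
  assumes lam: "lam > 0"
  shows "\<exists>x. \<forall>z. lasso_obj T y lam x \<le> lasso_obj T y lam z"
proof -
  define r where "r = lasso_obj T y lam 0"
  have r0: "r \<ge> 0" using obj_lower[OF lam, of 0 T y] unfolding r_def by simp
  have cont: "continuous_on (cball 0 r) (lasso_obj T y lam)"
    unfolding lasso_obj_def by (intro continuous_intros)
  obtain x where x: "x \<in> cball 0 r" and mx: "\<forall>z\<in>cball 0 r. lasso_obj T y lam x \<le> lasso_obj T y lam z"
    using continuous_attains_inf[OF compact_cball _ cont] r0 by fastforce
  have "lasso_obj T y lam x \<le> lasso_obj T y lam z" for z
  proof (cases "z \<in> cball 0 r")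
    case True then show ?thesis using mx by blast
  next
    case False
    then have "norm z > r" by simp
    then have "lasso_obj T y lam z > r" using obj_lower[OF lam, of z T y] by linarith
    moreover have "lasso_obj T y lam x \<le> r" using mx r0 unfolding r_def by simp
    ultimately show ?thesis by simp
  qed
  then show ?thesis by blast
qed

lemma obj_unique:
  fixes T :: "real^'n^'m"
  assumes inj: "inj (\<lambda>x. T *v x)" and lam: "lam > 0"
    and m1: "\<forall>z. lasso_obj T y lam x1 \<le> lasso_obj T y lam z"
    and m2: "\<forall>z. lasso_obj T y lam x2 \<le> lasso_obj T y lam z"
  shows "x1 = x2"
proof -
  define a where "a = T *v x1 - y"
  define b where "b = T *v x2 - y"
  define m where "m = (1/2) *\<^sub>R (x1 + x2)"
  have Tm: "T *v m - y = (1/2) *\<^sub>R (a + b)"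
  proof -
    have e1: "T *v m = (1/2) *\<^sub>R (T *v x1 + T *v x2)"
      unfolding m_def by (simp add: matrix_vector_mult_scaleR matrix_vector_right_distrib)
    have e2: "(1/2) *\<^sub>R (y + y) = y" by (simp only: scaleR_2[symmetric] scaleR_scaleR) simp
    have "T *v m - y = (1/2) *\<^sub>R (T *v x1 + T *v x2) - (1/2) *\<^sub>R (y + y)"
      by (simp only: e1 e2)
    also have "\<dots> = (1/2) *\<^sub>R ((T *v x1 + T *v x2) - (y + y))" by (rule scaleR_diff_right[symmetric])
    also have "\<dots> = (1/2) *\<^sub>R (a + b)" unfolding a_def b_def
      by (rule arg_cong[where f="scaleR (1/2)"]) (simp add: algebra_simps)
    finally show ?thesis .
  qed
  have par: "(norm ((1/2) *\<^sub>R (a + b)))^2 = ((norm a)^2 + (norm b)^2) / 2 - (norm (a - b))^2 / 4"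
    by (simp add: power2_norm_eq_inner inner_add inner_diff inner_commute algebra_simps) (simp add: field_simps)
  have l1: "(\<Sum>i\<in>UNIV. \<bar>m $ i\<bar>) \<le> ((\<Sum>i\<in>UNIV. \<bar>x1 $ i\<bar>) + (\<Sum>i\<in>UNIV. \<bar>x2 $ i\<bar>)) / 2"
  proof -
    have "(\<Sum>i\<in>UNIV. \<bar>m $ i\<bar>) \<le> (\<Sum>i\<in>UNIV. (\<bar>x1 $ i\<bar> + \<bar>x2 $ i\<bar>) / 2)"
    proof (rule sum_mono)
      fix i
      have "\<bar>x1$i + x2$i\<bar> \<le> \<bar>x1$i\<bar> + \<bar>x2$i\<bar>" by (rule abs_triangle_ineq)
      then show "\<bar>m $ i\<bar> \<le> (\<bar>x1 $ i\<bar> + \<bar>x2 $ i\<bar>) / 2" unfolding m_def by simp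
    qed
    also have "\<dots> = ((\<Sum>i\<in>UNIV. \<bar>x1 $ i\<bar>) + (\<Sum>i\<in>UNIV. \<bar>x2 $ i\<bar>)) / 2"
      by (simp add: sum_divide_distrib[symmetric] sum.distrib)
    finally show ?thesis .
  qed
  have "lasso_obj T y lam m \<le> (lasso_obj T y lam x1 + lasso_obj T y lam x2) / 2 - lam / 8 * (norm (a - b))^2"
    using l1 unfolding lasso_obj_def Tm par a_def[symmetric] b_def[symmetric] by (simp add: algebra_simps add_divide_distrib)
  moreover have "lasso_obj T y lam x1 \<le> lasso_obj T y lam m" "lasso_obj T y lam x2 \<le> lasso_obj T y lam m"
    using m1 m2 by auto
  ultimately have "lam / 8 * (norm (a - b))^2 \<le> 0"
    using add_divide_distrib[of "lasso_obj T y lam x1" "lasso_obj T y lam x2" 2] by linarith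
  then have "norm (a - b) = 0" using lam
    by (metis divide_pos_pos mult_pos_pos not_le power2_less_0 power_zero_numeral zero_less_norm_iff zero_less_numeral zero_less_power2)
  then have "T *v x1 = T *v x2" unfolding a_def b_def by simp
  then show ?thesis using inj by (meson injD)
qed

lemma lasso_min_char:
  fixes T :: "real^'n^'m"
  assumes inj: "inj (\<lambda>x. T *v x)" and lam: "lam > 0"
  shows "\<forall>z. lasso_obj T y lam (lasso_min T y lam) \<le> lasso_obj T y lam z"
    and "\<forall>z. lasso_obj T y lam x \<le> lasso_obj T y lam z \<Longrightarrow> lasso_min T y lam = x"
proof -
  have ex1: "\<exists>!x. \<forall>z. lasso_obj T y lam x \<le> lasso_obj T y lam z"
    using obj_exists[OF lam] obj_unique[OF inj lam] by blast
  show 1: "\<forall>z. lasso_obj T y lam (lasso_min T y lam) \<le> lasso_obj T y lam z"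
    unfolding lasso_min_def using theI'[OF ex1] .
  show "\<forall>z. lasso_obj T y lam x \<le> lasso_obj T y lam z \<Longrightarrow> lasso_min T y lam = x"
    using ex1 1 by blast
qed



theorem mainTheorem16:
  fixes T :: "real^'n^'m" and y :: "real^'m" and lam :: real
  assumes "inj (\<lambda>x. T *v x)"
    and "positive_cone_condition T"
    and "lam > 0"
  shows "\<exists>\<epsilon>. 0 < \<epsilon> \<and> \<epsilon> < lam \<and>
           (\<forall>\<mu>. lam - \<epsilon> \<le> \<mu> \<and> \<mu> \<le> lam \<longrightarrow> zero_set T y lam \<subseteq> zero_set T y \<mu>)"
proof -
  note inj = assms(1) and pcc = assms(2) and lam = assms(3)
  define x where "x = lasso_min T y lam"
  have xmin: "\<forall>z. lasso_obj T y lam x \<le> lasso_obj T y lam z"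
    unfolding x_def by (rule lasso_min_char(1)[OF inj lam])
  define c where "c = (\<lambda>i. lam * (column i T \<bullet> (y - T *v x)))"
  have K: "\<And>i. \<bar>c i\<bar> \<le> 1 \<and> c i * x$i = \<bar>x$i\<bar>"
    unfolding c_def by (rule kkt_nec[OF lam xmin])
  define I where "I = {i. x$i \<noteq> 0}"
  obtain w where wsup: "\<forall>i. i \<notin> I \<longrightarrow> w$i = 0"
      and wc0: "\<forall>k\<in>I. column k T \<bullet> (T *v w) = (\<chi> i. c i)$k"
    using solve_lemma[OF inj, of I "\<chi> i. c i"] by blast
  have wc: "\<forall>k\<in>I. column k T \<bullet> (T *v w) = c k" using wc0 by simp
  define g where "g = (\<lambda>i. column i T \<bullet> (T *v w))"
  have gI: "\<And>i. i \<in> I \<Longrightarrow> g i = c i" using wc unfolding g_def by blast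
  have gb: "\<And>j. j \<notin> I \<Longrightarrow> \<bar>g j\<bar> \<le> 1"
    unfolding g_def using pcc_bound[OF inj pcc _ wsup wc] K by blast
  define \<delta> where "\<delta> = Min (insert 1 ((\<lambda>i. \<bar>x$i\<bar>) ` I))"
  have \<delta>0: "\<delta> > 0" unfolding \<delta>_def I_def by (subst Min_gr_iff) auto
  have \<delta>x: "\<And>i. i \<in> I \<Longrightarrow> \<delta> \<le> \<bar>x$i\<bar>" unfolding \<delta>_def by (intro Min_le) auto
  define nw where "nw = norm w"
  have nw0: "nw \<ge> 0" unfolding nw_def by simp
  define \<epsilon> where "\<epsilon> = min (lam / 2) (\<delta> * lam^2 / (4 * (nw + 1)))"
  have e0: "\<epsilon> > 0" unfolding \<epsilon>_def using lam \<delta>0 nw0 by simp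
  have e1: "\<epsilon> < lam" unfolding \<epsilon>_def using lam by simp
  have main: "zero_set T y lam \<subseteq> zero_set T y \<mu>" if mu: "lam - \<epsilon> \<le> \<mu>" "\<mu> \<le> lam" for \<mu>
  proof -
    have mu2: "\<mu> \<ge> lam / 2" using mu \<epsilon>_def by linarith
    have mu0: "\<mu> > 0" using mu2 lam by linarith
    define \<alpha> where "\<alpha> = 1 / lam - 1 / \<mu>"
    define z where "z = x + \<alpha> *\<^sub>R w"
    have aabs: "\<bar>\<alpha>\<bar> = (lam - \<mu>) / (lam * \<mu>)"
      unfolding \<alpha>_def using mu lam mu0 by (simp add: field_simps abs_if)
    have "\<bar>\<alpha>\<bar> \<le> \<epsilon> / (lam * (lam / 2))"
      unfolding aabs using mu mu2 lam mu0 e0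
      by (intro frac_le) (auto intro: mult_left_mono)
    also have "\<dots> = 2 * \<epsilon> / lam^2" using lam by (simp add: power2_eq_square)
    finally have a1: "\<bar>\<alpha>\<bar> \<le> 2 * \<epsilon> / lam^2" .
    have "2 * \<epsilon> / lam^2 \<le> 2 * (\<delta> * lam^2 / (4 * (nw + 1))) / lam^2"
      using lam unfolding \<epsilon>_def by (intro divide_right_mono) auto
    also have "\<dots> = \<delta> / (2 * (nw + 1))" using lam nw0 by (simp add: divide_simps)
    finally have a2: "\<bar>\<alpha>\<bar> \<le> \<delta> / (2 * (nw + 1))" using a1 by linarith
    have a3: "\<bar>\<alpha>\<bar> * nw < \<delta>"
    proof -
      have dn: "\<delta> * nw \<ge> 0" using \<delta>0 nw0 by simp
      have "\<bar>\<alpha>\<bar> * nw \<le> \<delta> / (2 * (nw + 1)) * nw" using a2 nw0 by (rule mult_right_mono)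
      also have "\<dots> = \<delta> * (nw / (2 * (nw + 1)))" by simp
      also have "\<dots> < \<delta> * 1"
      proof (rule mult_strict_left_mono[OF _ \<delta>0])
        show "nw / (2 * (nw + 1)) < 1" using nw0 by (simp add: divide_less_eq)
      qed
      also have "\<dots> = \<delta>" by simp
      finally show ?thesis .
    qed
    have Tz: "T *v z = T *v x + \<alpha> *\<^sub>R (T *v w)"
      unfolding z_def by (simp add: matrix_vector_right_distrib matrix_vector_mult_scaleR)
    have cm: "\<mu> * (column i T \<bullet> (y - T *v z)) = (\<mu> / lam) * c i + (1 - \<mu> / lam) * g i" for i
    proof -
      have "column i T \<bullet> (y - T *v z) = c i / lam - \<alpha> * g i"
        unfolding Tz c_def g_def using lam by (simp add: inner_diff_right inner_add_right)
      then show ?thesis unfolding \<alpha>_def using lam mu0 by (simp add: field_simps)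
    qed
    have KK: "\<forall>i. \<bar>\<mu> * (column i T \<bullet> (y - T *v z))\<bar> \<le> 1 \<and>
               \<mu> * (column i T \<bullet> (y - T *v z)) * z$i = \<bar>z$i\<bar>"
    proof
      fix i
      show "\<bar>\<mu> * (column i T \<bullet> (y - T *v z))\<bar> \<le> 1 \<and>
               \<mu> * (column i T \<bullet> (y - T *v z)) * z$i = \<bar>z$i\<bar>"
      proof (cases "i \<in> I")
        case True
        have e: "\<mu> * (column i T \<bullet> (y - T *v z)) = c i" unfolding cm gI[OF True] by (simp add: algebra_simps)
        have xi: "x$i \<noteq> 0" using True unfolding I_def by simp
        have ci: "\<bar>c i\<bar> \<le> 1" "c i * x$i = \<bar>x$i\<bar>" using K by auto
        have "\<bar>x$i\<bar> = \<bar>c i\<bar> * \<bar>x$i\<bar>" using ci(2) by (metis abs_abs abs_mult)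
        then have c1: "\<bar>c i\<bar> = 1" using xi by simp
        have zi: "z$i = x$i + \<alpha> * w$i" unfolding z_def by simp
        have "\<bar>\<alpha> * w$i\<bar> \<le> \<bar>\<alpha>\<bar> * nw"
          unfolding nw_def abs_mult by (intro mult_left_mono component_le_norm_cart) auto
        then have small: "\<bar>\<alpha> * w$i\<bar> < \<bar>x$i\<bar>" using a3 \<delta>x[OF True] by linarith
        have "c i * z$i = \<bar>x$i\<bar> + c i * (\<alpha> * w$i)" unfolding zi using ci(2) by (simp add: algebra_simps)
        moreover have "\<bar>c i * (\<alpha> * w$i)\<bar> = \<bar>\<alpha> * w$i\<bar>" using c1 by (simp add: abs_mult)
        ultimately have pos: "c i * z$i > 0" using small by linarith
        have "\<bar>z$i\<bar> = \<bar>c i * z$i\<bar>" using c1 by (simp add: abs_mult)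
        then have "c i * z$i = \<bar>z$i\<bar>" using pos by simp
        then show ?thesis using e ci by simp
      next
        case False
        have zi: "z$i = 0" using False wsup unfolding z_def I_def by auto
        have t: "0 < \<mu> / lam" "\<mu> / lam \<le> 1" using mu0 lam mu by auto
        have ci1: "\<bar>c i\<bar> \<le> 1" using K by blast
        have gi1: "\<bar>g i\<bar> \<le> 1" using gb[OF False] .
        have "\<bar>(\<mu> / lam) * c i + (1 - \<mu> / lam) * g i\<bar> \<le> \<bar>(\<mu> / lam) * c i\<bar> + \<bar>(1 - \<mu> / lam) * g i\<bar>"
          by (rule abs_triangle_ineq)
        also have "\<dots> = (\<mu> / lam) * \<bar>c i\<bar> + (1 - \<mu> / lam) * \<bar>g i\<bar>"
          using t mu0 lam by (simp add: abs_mult)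
        also have "\<dots> \<le> (\<mu> / lam) * 1 + (1 - \<mu> / lam) * 1"
          using t ci1 gi1 by (intro add_mono mult_left_mono) simp_all
        finally show ?thesis unfolding cm zi by simp
      qed
    qed
    have zmin: "\<forall>x'. lasso_obj T y \<mu> z \<le> lasso_obj T y \<mu> x'"
      using kkt_suff[OF mu0 KK] by blast
    have "lasso_min T y \<mu> = z" by (rule lasso_min_char(2)[OF inj mu0 zmin])
    then show ?thesis unfolding zero_set_def x_def[symmetric] using wsup unfolding I_def z_def by auto
  qed
  show ?thesis using e0 e1 main by blast
qed


end
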